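(* Let $n=mp$, where $m$ is a positive integer and $p$ is a prime with $\gcd(m,p)=1$. Let $s,t$ be positive integers with $st=p-1$, and let $g$ be a generator of $\mathbb{Z}_p^\times$. Let $e$ be an integer satisfying $$e\equiv 1\pmod m,\qquad e\equiv g^t\pmod p,$$ and let $G=\langle e\rangle$ be the subgroup of $\mathbb{Z}_n^\times$ generated by $e$. Then the coset index function $f_G$ is an $(mp,\ m(1+t),\ \{0,m(s-1)\})$ zero-difference function.
   Context: For a subgroup $G$ of $\mathbb{Z}_n^\times$ and $r\in\mathbb{Z}_n$, the coset $rG=\{rg\mid g\in G\}$; these cosets partition $\mathbb{Z}_n$, forming a set $D_G$. The coset index function induced by $G$ is $f_G:\mathbb{Z}_n\to\mathbb{Z}_{|D_G|}$, $f_G(x)=h_G(C_x)$, where $C_x$ is the coset containing $x$ and $h_G:D_G\to\mathbb{Z}_{|D_G|}$ is a fixed bijection. A function $f:A\to B$ between finite abelian groups is an $(n,m,S)$ zero-difference function if $n=|A|$, $m=|f(A)|$, and for every nonzero $a\in A$, $|\{x\in A\mid f(x+a)=f(x)\}|\in S$. Here $A=(\mathbb{Z}_n,+)$. *)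

theory Defs
  imports "HOL-Number_Theory.Number_Theory"
begin

text \<open>The ring Z_n is modelled by the integers {0..<n} with arithmetic mod n.\<close>

definition cyc_subgroup :: "int \<Rightarrow> int \<Rightarrow> int set" where
  "cyc_subgroup n e = {e ^ k mod n | k. True}"

definition coset_mul :: "int \<Rightarrow> int set \<Rightarrow> int \<Rightarrow> int set" where
  "coset_mul n G r = {(r * x) mod n | x. x \<in> G}"

definition coset_classes :: "int \<Rightarrow> int set \<Rightarrow> int set set" where
  "coset_classes n G = {coset_mul n G r | r. r \<in> {0..<n}}"

text \<open>Coset index function f_G(x) = h_G(C_x), C_x the coset containing x
  (namely xG, since 1 is in G).\<close>
definition coset_index_fun :: "int \<Rightarrow> int set \<Rightarrow> (int set \<Rightarrow> int) \<Rightarrow> int \<Rightarrow> int" where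
  "coset_index_fun n G h x = h (coset_mul n G (x mod n))"

definition zero_difference_fun :: "int \<Rightarrow> nat \<Rightarrow> nat set \<Rightarrow> (int \<Rightarrow> 'b) \<Rightarrow> bool" where
  "zero_difference_fun n m S f \<longleftrightarrow>
     card (f ` {0..<n}) = m \<and>
     (\<forall>a \<in> {1..<n}. card {x \<in> {0..<n}. f ((x + a) mod n) = f x} \<in> S)"

end

theory Submission
  imports Defs
begin

lemma card_image_eqv:
  assumes "\<And>x y. x \<in> A \<Longrightarrow> y \<in> A \<Longrightarrow> F x = F y \<longleftrightarrow> G x = G y"
  shows "card (F ` A) = card (G ` A)"
proof -
  define H where "H c = G (SOME x. x \<in> A \<and> F x = c)" for c
  have H: "H (F x) = G x" if "x \<in> A" for x
  proof -
    have "\<exists>x'. x' \<in> A \<and> F x' = F x" using that by blast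
    hence "(SOME x'. x' \<in> A \<and> F x' = F x) \<in> A \<and> F (SOME x'. x' \<in> A \<and> F x' = F x) = F x"
      by (rule someI_ex)
    thus ?thesis unfolding H_def using assms that by blast
  qed
  have inj: "inj_on H (F ` A)"
    by (rule inj_onI) (auto simp: H assms)
  have "H ` (F ` A) = G ` A" by (force simp: H image_iff)
  have "card (H ` (F ` A)) = card (F ` A)" using inj by (rule card_image)
  thus ?thesis using \<open>H ` (F ` A) = G ` A\<close> by simp
qed

lemma count_mod:
  fixes M P :: int
  assumes M: "M \<ge> 0" and P: "P > 0" and U: "U \<subseteq> {0..<P}"
  shows "card {x \<in> {0..<M * P}. x mod P \<in> U} = nat M * card U"
proof -
  have fin: "finite U" using U finite_subset by blast
  define f where "f = (\<lambda>(q, u). q * P + u)"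
  have dm: "(q * P + u) div P = q" "(q * P + u) mod P = u" if "u \<in> U" for q u
    using that U P by auto
  have inj: "inj_on f ({0..<M} \<times> U)"
  proof (rule inj_onI)
    fix z z' assume z: "z \<in> {0..<M} \<times> U" "z' \<in> {0..<M} \<times> U" "f z = f z'"
    obtain q u where qu: "z = (q, u)" "u \<in> U" using z(1) by auto
    obtain q' u' where qu': "z' = (q', u')" "u' \<in> U" using z(2) by auto
    have e: "q * P + u = q' * P + u'" using z(3) qu qu' by (simp add: f_def)
    have "q = q'" using dm(1)[OF qu(2), of q] dm(1)[OF qu'(2), of q'] e by simp
    moreover have "u = u'" using dm(2)[OF qu(2), of q] dm(2)[OF qu'(2), of q'] e by simp
    ultimately show "z = z'" using qu qu' by simp
  qed
  have img: "f ` ({0..<M} \<times> U) = {x \<in> {0..<M * P}. x mod P \<in> U}"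
  proof
    show "f ` ({0..<M} \<times> U) \<subseteq> {x \<in> {0..<M * P}. x mod P \<in> U}"
    proof
      fix x assume "x \<in> f ` ({0..<M} \<times> U)"
      then obtain q u where qu: "x = q * P + u" "0 \<le> q" "q < M" "u \<in> U" by (auto simp: f_def)
      have u: "0 \<le> u" "u < P" using qu(4) U by auto
      have "(q + 1) * P \<le> M * P" using qu(3) P by (intro mult_right_mono) auto
      hence "q * P + P \<le> M * P" by (simp add: distrib_right)
      moreover have "0 \<le> q * P" using qu(2) P by simp
      ultimately show "x \<in> {x \<in> {0..<M * P}. x mod P \<in> U}" using qu u dm(2)[OF qu(4), of q] by auto
    qed
  next
    show "{x \<in> {0..<M * P}. x mod P \<in> U} \<subseteq> f ` ({0..<M} \<times> U)"
    proof
      fix x assume x: "x \<in> {x \<in> {0..<M * P}. x mod P \<in> U}"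
      have x1: "x = (x div P) * P + x mod P" by simp
      have q0: "0 \<le> x div P" using x P by (simp add: pos_imp_zdiv_nonneg_iff)
      have "x div P < M"
      proof (rule ccontr)
        assume "\<not> x div P < M"
        hence "M * P \<le> (x div P) * P" using P by (simp add: mult_right_mono)
        moreover have "(x div P) * P \<le> x" using x1 pos_mod_sign[OF P, of x] by linarith
        ultimately show False using x by auto
      qed
      hence "(x div P, x mod P) \<in> {0..<M} \<times> U" using q0 x by auto
      moreover have "f (x div P, x mod P) = x" by (simp add: f_def)
      ultimately show "x \<in> f ` ({0..<M} \<times> U)" by (metis image_eqI)
    qed
  qed
  have "card {x \<in> {0..<M * P}. x mod P \<in> U} = card ({0..<M} \<times> U)"
    using card_image[OF inj] img by simp
  also have "\<dots> = nat M * card U" by (simp add: card_cartesian_product)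
  finally show ?thesis .
qed


locale zd =
  fixes m p s t g :: nat and e :: int
  assumes m_pos: "m > 0" and p_prime: "prime p" and cop: "coprime m p"
    and s_pos: "s > 0" and t_pos: "t > 0" and st: "s * t = p - 1"
    and prim: "residue_primroot p g"
    and e1: "[e = 1] (mod int m)" and eg: "[e = int g ^ t] (mod int p)"
begin

lemma p_gt1: "p > 1" using p_prime prime_gt_1_nat by blast

lemma ordg: "ord p g = t * s"
  using prim st p_prime by (simp add: residue_primroot_def totient_prime mult.commute)

lemma cg: "coprime p g" using prim by (simp add: residue_primroot_def)

lemma Pprime: "prime (int p)" using p_prime by simp

lemma p_ndvd_g: "\<not> p dvd g"
proof
  assume "p dvd g"
  hence "is_unit p" using coprime_common_divisor[OF cg, of p] by simp
  thus False using p_gt1 by simp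
qed

lemma ek: "[e ^ k = int (g ^ (t * k))] (mod int p)"
  using cong_pow[OF eg, of k] by (simp add: power_mult)

lemma gpow_iff: "[g ^ a = g ^ b] (mod p) \<longleftrightarrow> [a = b] (mod (t * s))"
  using order_divides_expdiff[OF cg] ordg by simp

lemma Hpow: "[e ^ k = e ^ j] (mod int p) \<longleftrightarrow> [k = j] (mod s)"
proof -
  have "[e ^ k = e ^ j] (mod int p) \<longleftrightarrow> [int (g ^ (t*k)) = int (g ^ (t*j))] (mod int p)"
    using ek[of k] ek[of j] by (meson cong_sym cong_trans)
  also have "\<dots> \<longleftrightarrow> [g ^ (t*k) = g ^ (t*j)] (mod p)" by (rule cong_int_iff)
  also have "\<dots> \<longleftrightarrow> [t*k = t*j] (mod (t*s))" by (rule gpow_iff)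
  also have "\<dots> \<longleftrightarrow> [k = j] (mod s)" using t_pos by (simp add: cong_def mod_mult_mult1)
  finally show ?thesis .
qed

lemma not_dvd_e: "\<not> int p dvd e ^ k"
proof
  assume "int p dvd e ^ k"
  hence "[e ^ k = 0] (mod int p)" by (simp add: cong_0_iff)
  hence "[int (g ^ (t*k)) = 0] (mod int p)" using ek[of k] by (meson cong_sym cong_trans)
  hence "int p dvd int (g ^ (t*k))" by (simp only: cong_0_iff)
  hence "p dvd g ^ (t*k)" by (simp only: of_nat_dvd_iff)
  hence "p dvd g" using p_prime prime_dvd_power by blast
  with p_ndvd_g show False by simp
qed

lemma es_m: "[e ^ k = 1] (mod int m)" using cong_pow[OF e1, of k] by simp

lemma es_n: "[e ^ s = 1] (mod int (m * p))"
proof -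
  have "[e ^ s = e ^ 0] (mod int p)" using Hpow[of s 0] by (simp add: cong_def)
  hence "[e ^ s = 1] (mod int p)" by simp
  moreover have "coprime (int m) (int p)" using cop by simp
  ultimately show ?thesis using es_m[of s] coprime_cong_mult by (metis of_nat_mult)
qed


definition dlog :: "int \<Rightarrow> nat" where
  "dlog x = (SOME i. i < p - 1 \<and> [int (g ^ i) = x] (mod int p))"

definition psi :: "int \<Rightarrow> nat" where
  "psi x = (if int p dvd x then t else dlog x mod t)"

lemma dlog_ex:
  assumes "\<not> int p dvd x"
  shows "\<exists>i < p - 1. [int (g ^ i) = x] (mod int p)"
proof -
  have bij: "bij_betw (\<lambda>i. g ^ i mod p) {..<totient p} (totatives p)"
    by (rule residue_primroot_is_generator[OF p_gt1 prim])
  have "x mod int p \<noteq> 0" using assms by (simp add: dvd_eq_mod_eq_0)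
  moreover have "x mod int p \<ge> 0" using p_gt1 by simp
  ultimately have x1: "x mod int p > 0" by linarith
  have x2: "x mod int p < int p" using p_gt1 by simp
  have "nat (x mod int p) \<in> totatives p" using x1 x2 totatives_prime[OF p_prime] by auto
  hence "nat (x mod int p) \<in> (\<lambda>i. g ^ i mod p) ` {..<totient p}" using bij by (simp add: bij_betw_def)
  then obtain i where i: "i < totient p" "g ^ i mod p = nat (x mod int p)" by auto
  have "int (g ^ i mod p) = x mod int p" using i(2) x1 by simp
  hence "int (g ^ i) mod int p = x mod int p" by (simp add: of_nat_mod)
  hence "[int (g ^ i) = x] (mod int p)" by (simp add: cong_def)
  moreover have "i < p - 1" using i(1) totient_prime[OF p_prime] by simp
  ultimately show ?thesis by blast
qed

lemma dlog:
  assumes "\<not> int p dvd x"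
  shows "dlog x < p - 1" "[int (g ^ dlog x) = x] (mod int p)"
  using someI_ex[OF dlog_ex[OF assms]] unfolding dlog_def by blast+

lemma dlog_unique:
  assumes "i < p - 1" "[int (g ^ i) = x] (mod int p)"
  shows "dlog x = i"
proof -
  have nd: "\<not> int p dvd x"
  proof
    assume "int p dvd x"
    hence "int p dvd int (g ^ i)" using cong_dvd_iff[OF assms(2)] by simp
    hence "p dvd g ^ i" by (simp only: of_nat_dvd_iff)
    hence "p dvd g" using p_prime prime_dvd_power by blast
    with p_ndvd_g show False by simp
  qed
  have "[int (g ^ dlog x) = int (g ^ i)] (mod int p)"
    using dlog(2)[OF nd] assms(2) by (meson cong_sym cong_trans)
  hence "[g ^ dlog x = g ^ i] (mod p)" by (simp only: cong_int_iff)
  hence "[dlog x = i] (mod (t * s))" by (simp only: gpow_iff)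
  moreover have "p - 1 = t * s" using st by (simp add: mult.commute)
  ultimately show ?thesis using dlog(1)[OF nd] assms(1)
    using cong_less_modulus_unique_nat by metis
qed

lemma arith_lem:
  fixes i j :: nat
  assumes "i < t * s" "j < t * s"
  shows "(\<exists>k. [i = j + t * k] (mod (t * s))) \<longleftrightarrow> i mod t = j mod t"
proof
  assume "\<exists>k. [i = j + t * k] (mod (t * s))"
  then obtain k where "[i = j + t * k] (mod (t * s))" by blast
  hence "[i = j + t * k] (mod t)" by (rule cong_modulus_mult_nat)
  thus "i mod t = j mod t" by (simp add: cong_def)
next
  assume h: "i mod t = j mod t"
  show "\<exists>k. [i = j + t * k] (mod (t * s))"
  proof (cases "j \<le> i")
    case True
    have "t dvd i - j" using h True by (simp add: mod_eq_dvd_iff_nat)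
    then obtain k where "i - j = t * k" by blast
    hence "i = j + t * k" using True by simp
    hence "[i = j + t * k] (mod (t * s))" by simp
    thus ?thesis by blast
  next
    case False
    have "j mod t = i mod t" using h by simp
    hence "t dvd j - i" using False by (simp add: mod_eq_dvd_iff_nat)
    then obtain k where k: "j - i = t * k" by blast
    have "t * k < t * s" using k assms by linarith
    hence "k < s" by simp
    have "j + t * (s - k) = i + t * s" using k False \<open>k < s\<close>
      by (simp add: diff_mult_distrib2 algebra_simps)
    hence "[i = j + t * (s - k)] (mod (t * s))" by (simp add: cong_def)
    thus ?thesis by blast
  qed
qed

lemma psi_rel: "(\<exists>k. [x = y * e ^ k] (mod int p)) \<longleftrightarrow> psi x = psi y"
proof (cases "int p dvd y")
  case True
  have "(\<exists>k. [x = y * e ^ k] (mod int p)) \<longleftrightarrow> int p dvd x"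
  proof
    assume "\<exists>k. [x = y * e ^ k] (mod int p)"
    then obtain k where k: "[x = y * e ^ k] (mod int p)" by blast
    have "int p dvd y * e ^ k" using True by simp
    thus "int p dvd x" using cong_dvd_iff[OF k] by simp
  next
    assume "int p dvd x"
    hence "[x = 0] (mod int p)" "[y = 0] (mod int p)" using True by (simp_all add: cong_0_iff)
    hence "[x = y] (mod int p)" by (meson cong_sym cong_trans)
    hence "[x = y * e ^ 0] (mod int p)" by simp
    thus "\<exists>k. [x = y * e ^ k] (mod int p)" by blast
  qed
  moreover have "dlog x mod t \<noteq> t" using mod_less_divisor[OF t_pos, of "dlog x"] by linarith
  hence "psi x = psi y \<longleftrightarrow> int p dvd x" using True unfolding psi_def by simp
  ultimately show ?thesis by simp
next
  case ny: False
  show ?thesis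
  proof (cases "int p dvd x")
    case True
    have "\<not> [x = y * e ^ k] (mod int p)" for k
    proof
      assume k: "[x = y * e ^ k] (mod int p)"
      hence "int p dvd y * e ^ k" using True cong_dvd_iff[OF k] by blast
      hence "int p dvd y \<or> int p dvd e ^ k" by (simp only: prime_dvd_mult_iff[OF Pprime])
      thus False using ny not_dvd_e by blast
    qed
    moreover have "dlog y mod t \<noteq> t" using mod_less_divisor[OF t_pos, of "dlog y"] by linarith
    hence "psi x \<noteq> psi y" using True ny unfolding psi_def by simp
    ultimately show ?thesis by blast
  next
    case nx: False
    define i where "i = dlog x"
    define j where "j = dlog y"
    have i: "i < t * s" "[int (g ^ i) = x] (mod int p)" using dlog[OF nx] st unfolding i_def
      by (simp_all add: mult.commute)
    have j: "j < t * s" "[int (g ^ j) = y] (mod int p)" using dlog[OF ny] st unfolding j_def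
      by (simp_all add: mult.commute)
    have "[x = y * e ^ k] (mod int p) \<longleftrightarrow> [i = j + t * k] (mod (t * s))" for k
    proof -
      have "[y * e ^ k = int (g ^ j) * int (g ^ (t * k))] (mod int p)"
        using cong_mult[OF cong_sym[OF j(2)] ek[of k]] .
      hence a: "[y * e ^ k = int (g ^ (j + t * k))] (mod int p)" by (simp add: power_add)
      have "[x = y * e ^ k] (mod int p) \<longleftrightarrow> [int (g ^ i) = int (g ^ (j + t * k))] (mod int p)"
        using a i(2) by (meson cong_sym cong_trans)
      also have "\<dots> \<longleftrightarrow> [g ^ i = g ^ (j + t * k)] (mod p)" by (rule cong_int_iff)
      also have "\<dots> \<longleftrightarrow> [i = j + t * k] (mod (t * s))" by (rule gpow_iff)
      finally show ?thesis .
    qed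
    hence "(\<exists>k. [x = y * e ^ k] (mod int p)) \<longleftrightarrow> i mod t = j mod t"
      using arith_lem[OF i(1) j(1)] by simp
    thus ?thesis using nx ny by (simp add: psi_def i_def j_def)
  qed
qed

lemma psi_lt: "psi x \<le> t" using mod_less_divisor[OF t_pos] by (simp add: psi_def less_imp_le)


lemma coset_alt: "coset_mul n (cyc_subgroup n e) x = {x * e ^ k mod n | k. True}"
proof
  show "coset_mul n (cyc_subgroup n e) x \<subseteq> {x * e ^ k mod n | k. True}"
    unfolding coset_mul_def cyc_subgroup_def by (auto simp: mod_mult_right_eq)
  show "{x * e ^ k mod n | k. True} \<subseteq> coset_mul n (cyc_subgroup n e) x"
  proof
    fix z assume "z \<in> {x * e ^ k mod n | k. True}"
    then obtain k where k: "z = x * e ^ k mod n" by blast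
    hence "z = x * (e ^ k mod n) mod n" by (simp add: mod_mult_right_eq)
    moreover have "e ^ k mod n \<in> cyc_subgroup n e" unfolding cyc_subgroup_def by blast
    ultimately show "z \<in> coset_mul n (cyc_subgroup n e) x" unfolding coset_mul_def by blast
  qed
qed

lemma coset_sub:
  assumes "[x = y * e ^ k] (mod n)"
  shows "coset_mul n (cyc_subgroup n e) x \<subseteq> coset_mul n (cyc_subgroup n e) y"
proof
  fix z assume "z \<in> coset_mul n (cyc_subgroup n e) x"
  then obtain j where z: "z = x * e ^ j mod n" unfolding coset_alt by blast
  have "[x * e ^ j = y * e ^ k * e ^ j] (mod n)" using cong_mult[OF assms cong_refl[of "e ^ j"]] .
  hence "[x * e ^ j = y * e ^ (k + j)] (mod n)" by (simp add: power_add mult.assoc)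
  hence "z = y * e ^ (k + j) mod n" using z by (simp add: cong_def)
  thus "z \<in> coset_mul n (cyc_subgroup n e) y" unfolding coset_alt by blast
qed

abbreviation "N \<equiv> int (m * p)"
abbreviation "cs r \<equiv> coset_mul N (cyc_subgroup N e) r"

lemma coset_eq_iff: "cs x = cs y \<longleftrightarrow> (\<exists>k. [x = y * e ^ k] (mod N))"
proof
  assume h: "cs x = cs y"
  have "x mod N \<in> cs x" unfolding coset_alt by (rule CollectI, rule exI[of _ 0]) simp
  hence "x mod N \<in> cs y" using h by simp
  then obtain k where "x mod N = y * e ^ k mod N" unfolding coset_alt by blast
  thus "\<exists>k. [x = y * e ^ k] (mod N)" unfolding cong_def by blast
next
  assume "\<exists>k. [x = y * e ^ k] (mod N)"
  then obtain k where k: "[x = y * e ^ k] (mod N)" by blast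
  have c0: "[x * e ^ (k * (s - 1)) = y * e ^ k * e ^ (k * (s - 1))] (mod N)"
    using cong_mult[OF k cong_refl] .
  have eq: "y * e ^ k * e ^ (k * (s - 1)) = y * (e ^ s) ^ k"
  proof -
    have kk: "k + k * (s - 1) = s * k" using s_pos by (cases s) (auto simp: algebra_simps)
    have "e ^ k * e ^ (k * (s - 1)) = e ^ (k + k * (s - 1))" by (rule power_add[symmetric])
    also have "\<dots> = e ^ (s * k)" using kk by simp
    also have "\<dots> = (e ^ s) ^ k" by (rule power_mult)
    finally show ?thesis by (simp add: mult.assoc)
  qed
  have c1: "[x * e ^ (k * (s - 1)) = y * (e ^ s) ^ k] (mod N)" using c0[unfolded eq] .
  have "[y * (e ^ s) ^ k = y * 1 ^ k] (mod N)"
    using cong_mult[OF cong_refl cong_pow[OF es_n]] .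
  hence "[y * (e ^ s) ^ k = y] (mod N)" by simp
  from cong_trans[OF c1 this] have "[y = x * e ^ (k * (s - 1))] (mod N)" by (rule cong_sym)
  from coset_sub[OF this] coset_sub[OF k] show "cs x = cs y" by blast
qed

lemma rel_split:
  "[x = y * e ^ k] (mod N) \<longleftrightarrow> [x = y] (mod int m) \<and> [x = y * e ^ k] (mod int p)"
proof -
  have my: "[y * e ^ k = y] (mod int m)" using cong_mult[OF cong_refl[of y] es_m[of k]] by simp
  have cp: "coprime (int m) (int p)" using cop by simp
  show ?thesis
  proof
    assume h: "[x = y * e ^ k] (mod N)"
    have "[x = y * e ^ k] (mod int m)" by (rule cong_dvd_modulus[OF h]) simp
    hence "[x = y] (mod int m)" using my by (rule cong_trans)
    moreover have "[x = y * e ^ k] (mod int p)" by (rule cong_dvd_modulus[OF h]) simp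
    ultimately show "[x = y] (mod int m) \<and> [x = y * e ^ k] (mod int p)" by blast
  next
    assume h: "[x = y] (mod int m) \<and> [x = y * e ^ k] (mod int p)"
    hence "[x = y * e ^ k] (mod int m)" using my by (meson cong_sym cong_trans)
    from coprime_cong_mult[OF this conjunct2[OF h] cp] show "[x = y * e ^ k] (mod N)" by simp
  qed
qed

definition Phi :: "int \<Rightarrow> int \<times> nat" where
  "Phi x = (x mod int m, psi x)"

lemma cs_iff: "cs x = cs y \<longleftrightarrow> Phi x = Phi y"
proof -
  have "cs x = cs y \<longleftrightarrow> [x = y] (mod int m) \<and> (\<exists>k. [x = y * e ^ k] (mod int p))"
    unfolding coset_eq_iff rel_split by blast
  also have "\<dots> \<longleftrightarrow> Phi x = Phi y" unfolding psi_rel by (simp add: Phi_def cong_def)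
  finally show ?thesis .
qed

lemma g_not_dvd: "\<not> int p dvd int (g ^ i)"
proof
  assume "int p dvd int (g ^ i)"
  hence "p dvd g ^ i" by (simp only: of_nat_dvd_iff)
  hence "p dvd g" using p_prime prime_dvd_power by blast
  with p_ndvd_g show False by simp
qed

lemma Phi_image: "Phi ` {0..<N} = {0..<int m} \<times> {0..t}"
proof
  show "Phi ` {0..<N} \<subseteq> {0..<int m} \<times> {0..t}"
    using m_pos psi_lt by (auto simp: Phi_def)
next
  show "{0..<int m} \<times> {0..t} \<subseteq> Phi ` {0..<N}"
  proof
    fix z assume z: "z \<in> {0..<int m} \<times> {0..t}"
    obtain r j where rj: "z = (r, j)" "0 \<le> r" "r < int m" "j \<le> t" using z by auto
    define v where "v = (if j = t then 0 else int (g ^ j))"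
    have cp: "coprime (int m) (int p)" using cop by simp
    obtain x0 where x0: "[x0 = r] (mod int m)" "[x0 = v] (mod int p)"
      using binary_chinese_remainder_int[OF cp] by blast
    define x where "x = x0 mod N"
    have xN: "[x = x0] (mod N)" unfolding x_def by (simp add: cong_def)
    have xm: "[x = r] (mod int m)" using cong_trans[OF cong_dvd_modulus[OF xN] x0(1)] by simp
    have xp: "[x = v] (mod int p)" using cong_trans[OF cong_dvd_modulus[OF xN] x0(2)] by simp
    have xr: "x \<in> {0..<N}" unfolding x_def using m_pos p_gt1 by simp
    have "x mod int m = r" using xm rj by (simp add: cong_def)
    moreover have "psi x = j"
    proof (cases "j = t")
      case True
      hence "int p dvd x" using xp by (simp add: v_def cong_0_iff)
      thus ?thesis using True by (simp add: psi_def)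
    next
      case False
      hence xp': "[int (g ^ j) = x] (mod int p)" using xp by (simp add: v_def cong_sym)
      have nd: "\<not> int p dvd x" using cong_dvd_iff[OF xp'] g_not_dvd by blast
      have "t \<le> s * t" using s_pos by simp
      hence "j < p - 1" using False rj(4) st by linarith
      hence "dlog x = j" using dlog_unique xp' by blast
      thus ?thesis using nd False rj(4) by (simp add: psi_def)
    qed
    ultimately have "Phi x = z" using rj by (simp add: Phi_def)
    thus "z \<in> Phi ` {0..<N}" using xr by blast
  qed
qed


lemma Qc: "[u + a = u * e ^ k] (mod int p) \<longleftrightarrow> [u * (e ^ k - 1) = a] (mod int p)"
proof -
  have h: "u * (e ^ k - 1) - a = - (u + a - u * e ^ k)" by (simp add: algebra_simps)
  have "[u * (e ^ k - 1) = a] (mod int p) \<longleftrightarrow> int p dvd (u * (e ^ k - 1) - a)"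
    by (simp only: cong_iff_dvd_diff)
  also have "\<dots> \<longleftrightarrow> int p dvd - (u + a - u * e ^ k)" by (simp only: h)
  also have "\<dots> \<longleftrightarrow> [u + a = u * e ^ k] (mod int p)" by (simp only: dvd_minus_iff cong_iff_dvd_diff)
  finally show ?thesis by simp
qed

lemma Ucount:
  assumes na: "\<not> int p dvd a"
  shows "card {u \<in> {0..<int p}. \<exists>k. [u + a = u * e ^ k] (mod int p)} = s - 1"
proof -
  let ?U = "{u \<in> {0..<int p}. \<exists>k. [u + a = u * e ^ k] (mod int p)}"
  have cpk: "coprime (e ^ k - 1) (int p)" if k: "k \<in> {1..<s}" for k
  proof -
    have "\<not> int p dvd (e ^ k - 1)"
    proof
      assume "int p dvd (e ^ k - 1)"
      hence "[e ^ k = e ^ 0] (mod int p)" by (simp add: cong_iff_dvd_diff)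
      hence "[k = 0] (mod s)" by (simp only: Hpow)
      hence "k mod s = 0" by (simp add: cong_def)
      thus False using k by simp
    qed
    from prime_imp_coprime[OF Pprime this] show ?thesis by (simp add: coprime_commute)
  qed
  have ex: "\<exists>u. u \<in> {0..<int p} \<and> [u + a = u * e ^ k] (mod int p)" if k: "k \<in> {1..<s}" for k
  proof -
    obtain z where z: "[(e ^ k - 1) * z = 1] (mod int p)"
      using cong_solve_coprime_int[OF cpk[OF k]] by blast
    define u where "u = (a * z) mod int p"
    have "[u = a * z] (mod int p)" unfolding u_def by (simp add: cong_def)
    hence "[u * (e ^ k - 1) = a * z * (e ^ k - 1)] (mod int p)" by (rule cong_mult[OF _ cong_refl])
    moreover have "[a * z * (e ^ k - 1) = a * 1] (mod int p)"
      using cong_mult[OF cong_refl[of a] z] by (simp add: ac_simps)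
    ultimately have "[u * (e ^ k - 1) = a] (mod int p)" using cong_trans by fastforce
    moreover have "u \<in> {0..<int p}" unfolding u_def using p_gt1 by simp
    ultimately show ?thesis using Qc by blast
  qed
  have uniq_u: "u = u'" if "k \<in> {1..<s}" "u \<in> {0..<int p}" "u' \<in> {0..<int p}"
    "[u + a = u * e ^ k] (mod int p)" "[u' + a = u' * e ^ k] (mod int p)" for u u' k
  proof -
    have "[u * (e ^ k - 1) = a] (mod int p)" "[u' * (e ^ k - 1) = a] (mod int p)"
      using that(4,5) Qc by blast+
    hence "[u * (e ^ k - 1) = u' * (e ^ k - 1)] (mod int p)" by (meson cong_sym cong_trans)
    hence "[u = u'] (mod int p)" using cong_mult_rcancel[OF cpk[OF that(1)]] by blast
    thus ?thesis using that(2,3) by (simp add: cong_def)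
  qed
  have uniq_k: "k = k'" if "k \<in> {1..<s}" "k' \<in> {1..<s}"
    "[u + a = u * e ^ k] (mod int p)" "[u + a = u * e ^ k'] (mod int p)" for u k k'
  proof -
    have nu: "\<not> int p dvd u"
    proof
      assume pu: "int p dvd u"
      hence "int p dvd u * e ^ k" by simp
      hence "int p dvd u + a" using cong_dvd_iff[OF that(3)] by blast
      thus False using pu na by (simp add: dvd_add_right_iff)
    qed
    have cu: "coprime u (int p)" using prime_imp_coprime[OF Pprime nu] by (simp add: coprime_commute)
    have "[u * e ^ k = u * e ^ k'] (mod int p)" using that(3,4) by (meson cong_sym cong_trans)
    hence "[e ^ k = e ^ k'] (mod int p)" using cong_mult_lcancel[OF cu] by blast
    hence "[k = k'] (mod s)" by (simp only: Hpow)
    thus ?thesis using that(1,2) cong_less_modulus_unique_nat by auto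
  qed
  have red: "\<exists>k \<in> {1..<s}. [u + a = u * e ^ k] (mod int p)" if u: "u \<in> ?U" for u
  proof -
    obtain k where k: "[u + a = u * e ^ k] (mod int p)" using u by blast
    define k' where "k' = k mod s"
    have "[k = k'] (mod s)" unfolding k'_def by (simp add: cong_def)
    hence "[e ^ k = e ^ k'] (mod int p)" by (simp only: Hpow)
    hence "[u * e ^ k = u * e ^ k'] (mod int p)" by (rule cong_mult[OF cong_refl])
    hence k2: "[u + a = u * e ^ k'] (mod int p)" using k cong_trans by blast
    have "k' \<noteq> 0"
    proof
      assume "k' = 0"
      hence "[u + a = u] (mod int p)" using k2 by simp
      hence "int p dvd a" by (simp add: cong_iff_dvd_diff)
      thus False using na by simp
    qed
    moreover have "k' < s" unfolding k'_def using s_pos by simp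
    ultimately show ?thesis using k2 by auto
  qed
  define \<sigma> where "\<sigma> k = (SOME u. u \<in> {0..<int p} \<and> [u + a = u * e ^ k] (mod int p))" for k
  have \<sigma>: "\<sigma> k \<in> {0..<int p} \<and> [\<sigma> k + a = \<sigma> k * e ^ k] (mod int p)" if "k \<in> {1..<s}" for k
    unfolding \<sigma>_def by (rule someI_ex[OF ex[OF that]])
  have "?U = \<sigma> ` {1..<s}"
  proof
    show "?U \<subseteq> \<sigma> ` {1..<s}"
    proof
      fix u assume u: "u \<in> ?U"
      then obtain k where k: "k \<in> {1..<s}" "[u + a = u * e ^ k] (mod int p)" using red by blast
      have "u = \<sigma> k" using uniq_u[OF k(1) _ _ k(2)] \<sigma>[OF k(1)] u by blast
      thus "u \<in> \<sigma> ` {1..<s}" using k(1) by blast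
    qed
    show "\<sigma> ` {1..<s} \<subseteq> ?U" using \<sigma> by blast
  qed
  moreover have "inj_on \<sigma> {1..<s}"
    by (rule inj_onI) (metis \<sigma> uniq_k)
  ultimately show ?thesis by (simp add: card_image)
qed


lemma p_ndvd_a:
  assumes "a \<in> {1..<N}" "int m dvd a"
  shows "\<not> int p dvd a"
proof
  assume pa: "int p dvd a"
  obtain a' where a': "a = int m * a'" using assms(2) by blast
  have "0 < int m * a'" using a' assms(1) by simp
  hence "a' > 0" using m_pos by (simp add: zero_less_mult_iff)
  moreover have "a' < int p" using a' assms(1) m_pos by simp
  moreover have "int p dvd int m \<or> int p dvd a'" using pa a' prime_dvd_mult_iff[OF Pprime] by blast
  moreover have "\<not> int p dvd int m"
  proof
    assume "int p dvd int m"
    hence "p dvd m" by (simp only: of_nat_dvd_iff)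
    hence "is_unit p" using coprime_common_divisor[OF cop, of p] by simp
    thus False using p_gt1 by simp
  qed
  ultimately have "int p dvd a'" by blast
  hence "int p \<le> a'" using \<open>a' > 0\<close> by (rule zdvd_imp_le)
  thus False using \<open>a' < int p\<close> by simp
qed

lemma main:
  assumes bij: "bij_betw h (coset_classes N (cyc_subgroup N e))
           {0..<int (card (coset_classes N (cyc_subgroup N e)))}"
  shows "zero_difference_fun N (m * (1 + t)) {0, m * (s - 1)}
           (coset_index_fun N (cyc_subgroup N e) h)"
proof -
  let ?f = "coset_index_fun N (cyc_subgroup N e) h"
  let ?C = "coset_classes N (cyc_subgroup N e)"
  have CC: "?C = (\<lambda>r. cs r) ` {0..<N}" unfolding coset_classes_def by blast
  have inj: "inj_on h ?C" using bij by (rule bij_betw_imp_inj_on)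
  have fx: "?f x = h (cs x)" if "x \<in> {0..<N}" for x
    using that unfolding coset_index_fun_def by simp
  have "card ((\<lambda>r. cs r) ` {0..<N}) = card (Phi ` {0..<N})"
    by (rule card_image_eqv) (rule cs_iff)
  also have "\<dots> = m * (1 + t)" unfolding Phi_image by (simp add: card_cartesian_product)
  finally have cardC: "card ?C = m * (1 + t)" using CC by simp
  have "?f ` {0..<N} = h ` ?C" unfolding CC image_image using fx by simp
  hence c1: "card (?f ` {0..<N}) = m * (1 + t)" using card_image[OF inj] cardC by simp
  have c2: "card {x \<in> {0..<N}. ?f ((x + a) mod N) = ?f x} \<in> {0, m * (s - 1)}"
    if a: "a \<in> {1..<N}" for a
  proof -
    have Np: "N > 0" using m_pos p_gt1 by simp
    have key: "?f ((x + a) mod N) = ?f x \<longleftrightarrow>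
        int m dvd a \<and> x mod int p \<in> {u \<in> {0..<int p}. \<exists>k. [u + a = u * e ^ k] (mod int p)}"
      if x: "x \<in> {0..<N}" for x
    proof -
      have xa: "(x + a) mod N \<in> {0..<N}" using Np by simp
      have "?f ((x + a) mod N) = ?f x \<longleftrightarrow> h (cs ((x + a) mod N)) = h (cs x)"
        using fx[OF xa] fx[OF x] by simp
      also have "\<dots> \<longleftrightarrow> cs ((x + a) mod N) = cs x"
      proof -
        have "cs ((x + a) mod N) \<in> ?C" "cs x \<in> ?C" using CC xa x by blast+
        from inj_on_eq_iff[OF inj this] show ?thesis .
      qed
      also have "\<dots> \<longleftrightarrow> (\<exists>k. [x + a = x * e ^ k] (mod N))"
        unfolding coset_eq_iff by (simp add: cong_def)
      also have "\<dots> \<longleftrightarrow> (\<exists>k. [x + a = x] (mod int m) \<and> [x + a = x * e ^ k] (mod int p))"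
        unfolding rel_split ..
      also have "\<dots> \<longleftrightarrow> int m dvd a \<and> (\<exists>k. [x mod int p + a = x mod int p * e ^ k] (mod int p))"
      proof -
        have "[x + a = x] (mod int m) \<longleftrightarrow> int m dvd a" by (simp add: cong_iff_dvd_diff)
        moreover have "[x + a = x * e ^ k] (mod int p) \<longleftrightarrow> [x mod int p + a = x mod int p * e ^ k] (mod int p)" for k
          by (simp add: cong_def mod_add_left_eq mod_mult_left_eq)
        ultimately show ?thesis by simp
      qed
      also have "\<dots> \<longleftrightarrow> int m dvd a \<and> x mod int p \<in> {u \<in> {0..<int p}. \<exists>k. [u + a = u * e ^ k] (mod int p)}"
        using p_gt1 by simp
      finally show ?thesis .
    qed
    show ?thesis
    proof (cases "int m dvd a")
      case False
      define S where "S = {x \<in> {0..<N}. ?f ((x + a) mod N) = ?f x}"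
      have "S = {}" unfolding S_def using key False by blast
      hence "card S \<in> {0, m * (s - 1)}" by simp
      thus ?thesis unfolding S_def .
    next
      case True
      let ?U = "{u \<in> {0..<int p}. \<exists>k. [u + a = u * e ^ k] (mod int p)}"
      have "{x \<in> {0..<N}. ?f ((x + a) mod N) = ?f x} = {x \<in> {0..<N}. x mod int p \<in> ?U}"
        by (rule Collect_cong) (use key True in blast)
      also have "\<dots> = {x \<in> {0..<int m * int p}. x mod int p \<in> ?U}" by simp
      finally have "card {x \<in> {0..<N}. ?f ((x + a) mod N) = ?f x} = card {x \<in> {0..<int m * int p}. x mod int p \<in> ?U}"
        by simp
      also have "\<dots> = nat (int m) * card ?U"
        by (rule count_mod) (use p_gt1 in auto)
      also have "\<dots> = m * (s - 1)" using Ucount[OF p_ndvd_a[OF a True]] by simp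
      finally show ?thesis by simp
    qed
  qed
  show ?thesis unfolding zero_difference_fun_def using c1 c2 by blast
qed

end

theorem theorem3p9:
  fixes m p s t g :: nat and e :: int and h :: "int set \<Rightarrow> int"
  assumes "m > 0" and "prime p" and "coprime m p"
    and "s > 0" and "t > 0" and "s * t = p - 1"
    and "residue_primroot p g"
    and "[e = 1] (mod int m)" and "[e = int g ^ t] (mod int p)"
    and "bij_betw h (coset_classes (int (m * p)) (cyc_subgroup (int (m * p)) e))
           {0..<int (card (coset_classes (int (m * p)) (cyc_subgroup (int (m * p)) e)))}"
  shows "zero_difference_fun (int (m * p)) (m * (1 + t)) {0, m * (s - 1)}
           (coset_index_fun (int (m * p)) (cyc_subgroup (int (m * p)) e) h)"
proof -
  interpret zd m p s t g e using assms(1-9) by unfold_locales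
  show ?thesis using main[OF assms(10)] .
qed

end
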